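(* Let $n\ge1$ and $P=\Phi^+(A_n)=\{(i,j)\colon 1\le i,j\le n,\ i+j\ge n+1\}$. Then $\sum_{p\in P}(-1)^{\mathrm{rk}(p)}\mathbb{1}_p\equiv \frac{n}{2}$, where $\mathrm{rk}(i,j)=i+j-(n+1)$.
   Context: $P$ is ordered by $(i,j)\le(i',j')$ iff $i\le i'$ and $j\le j'$; $\mathrm{rk}$ is its rank function. $\mathcal{J}(P)$ is the set of order ideals of $P$. For $x\in P$, $I\in\mathcal{J}(P)$: $\mathbb{1}_x(I)=1$ if $x\in I$, else $0$; $T_x^+(I)=1$ if $x$ is a minimal element of $P\setminus I$, else $0$; $T_x^-(I)=1$ if $x$ is a maximal element of $I$, else $0$; $T_x=T_x^+-T_x^-$. For $f,g\colon\mathcal{J}(P)\to\mathbb{R}$, $f\equiv g$ means $f-g=\sum_{x\in P}c_xT_x$ for some real constants $c_x$; a real number denotes the corresponding constant function. *)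

theory Defs
  imports Main "HOL.Real"
begin

definition ple :: "nat \<times> nat \<Rightarrow> nat \<times> nat \<Rightarrow> bool" where
  "ple x y \<longleftrightarrow> fst x \<le> fst y \<and> snd x \<le> snd y"

definition stair :: "nat \<Rightarrow> (nat \<times> nat) set" where
  "stair n = {(i, j). 1 \<le> i \<and> i \<le> n \<and> 1 \<le> j \<and> j \<le> n \<and> i + j \<ge> n + 1}"

text \<open>Rank function rk(i,j) = i + j - (n+1) (nonnegative on stair n).\<close>
definition rk :: "nat \<Rightarrow> nat \<times> nat \<Rightarrow> nat" where
  "rk n p = fst p + snd p - (n + 1)"

definition order_ideals :: "(nat \<times> nat) set \<Rightarrow> (nat \<times> nat) set set" where
  "order_ideals P = {I. I \<subseteq> P \<and> (\<forall>x\<in>I. \<forall>y\<in>P. ple y x \<longrightarrow> y \<in> I)}"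

definition indic :: "nat \<times> nat \<Rightarrow> (nat \<times> nat) set \<Rightarrow> real" where
  "indic x I = (if x \<in> I then 1 else 0)"

definition Tplus :: "(nat \<times> nat) set \<Rightarrow> nat \<times> nat \<Rightarrow> (nat \<times> nat) set \<Rightarrow> real" where
  "Tplus P x I = (if x \<in> P - I \<and> (\<forall>y\<in>P - I. ple y x \<longrightarrow> y = x) then 1 else 0)"

definition Tminus :: "(nat \<times> nat) set \<Rightarrow> nat \<times> nat \<Rightarrow> (nat \<times> nat) set \<Rightarrow> real" where
  "Tminus P x I = (if x \<in> I \<and> (\<forall>y\<in>I. ple x y \<longrightarrow> y = x) then 1 else 0)"

definition toggle :: "(nat \<times> nat) set \<Rightarrow> nat \<times> nat \<Rightarrow> (nat \<times> nat) set \<Rightarrow> real" where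
  "toggle P x I = Tplus P x I - Tminus P x I"

text \<open>f \<equiv> g on J(P): f - g is a linear combination of toggleability statistics.\<close>
definition toggle_equiv ::
  "(nat \<times> nat) set \<Rightarrow> ((nat \<times> nat) set \<Rightarrow> real) \<Rightarrow> ((nat \<times> nat) set \<Rightarrow> real) \<Rightarrow> bool" where
  "toggle_equiv P f g \<longleftrightarrow>
     (\<exists>c :: nat \<times> nat \<Rightarrow> real. \<forall>I\<in>order_ideals P. f I - g I = (\<Sum>x\<in>P. c x * toggle P x I))"

end

theory Submission
  imports Defs
begin

definition tc :: "nat \<Rightarrow> (nat \<times> nat) set \<Rightarrow> nat \<times> nat \<Rightarrow> real" where
  "tc n J x = (if x \<notin> J \<and> ((fst x - 1, snd x) \<in> stair n \<longrightarrow> (fst x - 1, snd x) \<in> J)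
                 \<and> ((fst x, snd x - 1) \<in> stair n \<longrightarrow> (fst x, snd x - 1) \<in> J) then 1 else 0)
             - (if x \<in> J \<and> (fst x + 1, snd x) \<notin> J \<and> (fst x, snd x + 1) \<notin> J then 1 else 0)"

lemma stair_finite: "finite (stair n)"
proof -
  have "stair n \<subseteq> {1..n} \<times> {1..n}" by (auto simp: stair_def)
  then show ?thesis by (rule finite_subset) auto
qed

lemma toggle_tc:
  assumes J: "J \<in> order_ideals (stair n)" and x: "x \<in> stair n"
  shows "toggle (stair n) x J = tc n J x"
proof -
  obtain a b where xab: "x = (a, b)" by (cases x)
  have ab1: "a - 1 \<noteq> a" "b - 1 \<noteq> b" using x unfolding xab by (auto simp: stair_def)
  have sub: "J \<subseteq> stair n" and dc: "\<And>u v. u \<in> J \<Longrightarrow> v \<in> stair n \<Longrightarrow> ple v u \<Longrightarrow> v \<in> J"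
    using J by (auto simp: order_ideals_def)
  have P1: "(x \<in> stair n - J \<and> (\<forall>y\<in>stair n - J. ple y x \<longrightarrow> y = x)) \<longleftrightarrow>
     (x \<notin> J \<and> ((fst x - 1, snd x) \<in> stair n \<longrightarrow> (fst x - 1, snd x) \<in> J)
                 \<and> ((fst x, snd x - 1) \<in> stair n \<longrightarrow> (fst x, snd x - 1) \<in> J))"
  proof
    assume h: "x \<in> stair n - J \<and> (\<forall>y\<in>stair n - J. ple y x \<longrightarrow> y = x)"
    then show "x \<notin> J \<and> ((fst x - 1, snd x) \<in> stair n \<longrightarrow> (fst x - 1, snd x) \<in> J)
                 \<and> ((fst x, snd x - 1) \<in> stair n \<longrightarrow> (fst x, snd x - 1) \<in> J)"
    proof (intro conjI impI)
      show "x \<notin> J" using h by auto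
      assume "(fst x - 1, snd x) \<in> stair n"
      then show "(fst x - 1, snd x) \<in> J" using h[THEN conjunct2, rule_format, of "(a-1,b)"] x ab1
        unfolding xab by (auto simp: ple_def stair_def split: if_splits)
    next
      assume "(fst x, snd x - 1) \<in> stair n"
      then show "(fst x, snd x - 1) \<in> J" using h[THEN conjunct2, rule_format, of "(a,b-1)"] x ab1
        unfolding xab by (auto simp: ple_def stair_def split: if_splits)
    qed
  next
    assume h: "x \<notin> J \<and> ((fst x - 1, snd x) \<in> stair n \<longrightarrow> (fst x - 1, snd x) \<in> J)
                 \<and> ((fst x, snd x - 1) \<in> stair n \<longrightarrow> (fst x, snd x - 1) \<in> J)"
    have "y = x" if y: "y \<in> stair n - J" "ple y x" for y
    proof (rule ccontr)
      assume ne: "y \<noteq> x"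
      obtain c d where yc: "y = (c, d)" by (cases y)
      show False
      proof (cases "c < a")
        case True
        have "c \<le> a - 1" using True by simp
        have "(a - 1, b) \<in> stair n" using x y True unfolding xab yc by (auto simp: stair_def ple_def)
        then have "(a - 1, b) \<in> J" using h xab by auto
        then have "y \<in> J" using dc[of "(a-1,b)" y] y True \<open>c \<le> a - 1\<close> unfolding xab yc by (auto simp: ple_def)
        then show False using y by auto
      next
        case False
        then have "d < b" using ne y unfolding xab yc by (auto simp: ple_def)
        have "d \<le> b - 1" using \<open>d < b\<close> by simp
        have "(a, b - 1) \<in> stair n" using x y \<open>d < b\<close> unfolding xab yc by (auto simp: stair_def ple_def)
        then have "(a, b - 1) \<in> J" using h xab by auto
        then have "y \<in> J" using dc[of "(a,b-1)" y] y \<open>d < b\<close> \<open>d \<le> b - 1\<close> unfolding xab yc by (auto simp: ple_def)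
        then show False using y by auto
      qed
    qed
    then show "x \<in> stair n - J \<and> (\<forall>y\<in>stair n - J. ple y x \<longrightarrow> y = x)" using h x by auto
  qed
  have P2: "(x \<in> J \<and> (\<forall>y\<in>J. ple x y \<longrightarrow> y = x)) \<longleftrightarrow>
     (x \<in> J \<and> (fst x + 1, snd x) \<notin> J \<and> (fst x, snd x + 1) \<notin> J)"
  proof
    assume h: "x \<in> J \<and> (\<forall>y\<in>J. ple x y \<longrightarrow> y = x)"
    have "(a + 1, b) \<notin> J"
    proof
      assume "(a + 1, b) \<in> J"
      then have "(a + 1, b) = x" using h[THEN conjunct2, rule_format, of "(a+1,b)"] unfolding xab by (simp add: ple_def)
      then show False unfolding xab by simp
    qed
    moreover have "(a, b + 1) \<notin> J"
    proof
      assume "(a, b + 1) \<in> J"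
      then have "(a, b + 1) = x" using h[THEN conjunct2, rule_format, of "(a,b+1)"] unfolding xab by (simp add: ple_def)
      then show False unfolding xab by simp
    qed
    ultimately show "x \<in> J \<and> (fst x + 1, snd x) \<notin> J \<and> (fst x, snd x + 1) \<notin> J"
      using h unfolding xab by simp
  next
    assume h: "x \<in> J \<and> (fst x + 1, snd x) \<notin> J \<and> (fst x, snd x + 1) \<notin> J"
    have "y = x" if y: "y \<in> J" "ple x y" for y
    proof (rule ccontr)
      assume ne: "y \<noteq> x"
      obtain c d where yc: "y = (c, d)" by (cases y)
      have yP: "y \<in> stair n" using y sub by auto
      show False
      proof (cases "a < c")
        case True
        have "(a + 1, b) \<in> stair n" using x yP y True unfolding xab yc by (auto simp: stair_def ple_def)
        then have "(a + 1, b) \<in> J" using dc[of y "(a+1,b)"] y True unfolding xab yc by (auto simp: ple_def)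
        then show False using h xab by auto
      next
        case False
        then have "b < d" using ne y unfolding xab yc by (auto simp: ple_def)
        have "(a, b + 1) \<in> stair n" using x yP y \<open>b < d\<close> unfolding xab yc by (auto simp: stair_def ple_def)
        then have "(a, b + 1) \<in> J" using dc[of y "(a,b+1)"] y \<open>b < d\<close> unfolding xab yc by (auto simp: ple_def)
        then show False using h xab by auto
      qed
    qed
    then show "x \<in> J \<and> (\<forall>y\<in>J. ple x y \<longrightarrow> y = x)" using h by auto
  qed
  show ?thesis unfolding toggle_def Tplus_def Tminus_def tc_def using P1 P2 by simp
qed

definition cc :: "nat \<Rightarrow> nat \<times> nat \<Rightarrow> real" where
  "cc n x = (if even (rk n x) then - 1 / 2 else 0)"

definition DD :: "nat \<Rightarrow> (nat \<times> nat) set \<Rightarrow> nat \<Rightarrow> nat \<Rightarrow> nat \<times> nat \<Rightarrow> real" where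
  "DD n I i j x =
     (if x = (i, j) then (if even (rk n (i, j)) then 1 else 0) else 0)
   + (if x = (i - 1, j) then (if odd (rk n (i, j)) \<and> (i - 1, j + 1) \<notin> I then - 1 / 2 else 0) else 0)
   + (if x = (i, j + 1) then (if odd (rk n (i, j)) \<and> (i - 1, j + 1) \<in> I then - 1 / 2 else 0) else 0)
   + (if x = (i, j - 1) then (if odd (rk n (i, j)) \<and> (i + 1, j - 1) \<notin> I then - 1 / 2 else 0) else 0)
   + (if x = (i + 1, j) then (if odd (rk n (i, j)) \<and> (i + 1, j - 1) \<in> I then - 1 / 2 else 0) else 0)"

lemma pointwise:
  assumes I: "I \<in> order_ideals (stair n)" and m: "(i, j) \<in> I"
    and mx: "\<forall>y\<in>I. fst y + snd y \<le> i + j" and x: "x \<in> stair n"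
  shows "cc n x * (tc n I x - tc n (I - {(i, j)}) x) = DD n I i j x"
proof -
  have sub: "I \<subseteq> stair n" and dc: "\<And>u v. u \<in> J \<Longrightarrow> v \<in> stair n \<Longrightarrow> ple v u \<Longrightarrow> v \<in> I"
    if "J = I" for J using I that by (auto simp: order_ideals_def)
  have mP: "(i, j) \<in> stair n" using m sub by auto
  have nu1: "(i + 1, j) \<notin> I" using mx by fastforce
  have nu2: "(i, j + 1) \<notin> I" using mx by fastforce
  have lo1: "(i - 1, j) \<in> I" if "(i - 1, j) \<in> stair n"
    using dc[OF refl m that] by (simp add: ple_def)
  have lo2: "(i, j - 1) \<in> I" if "(i, j - 1) \<in> stair n"
    using dc[OF refl m that] by (simp add: ple_def)
  have i1: "i \<ge> 1" "j \<ge> 1" "i \<le> n" "j \<le> n" "i + j \<ge> n + 1" "i - 1 \<noteq> i" "j - 1 \<noteq> j" "Suc (i - Suc 0) = i" "Suc (j - Suc 0) = j" using mP by (auto simp: stair_def)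
  have nq: "(i - Suc 0 = i) = False" "(i = i - Suc 0) = False" "(j - Suc 0 = j) = False" "(j = j - Suc 0) = False"
    "(i - Suc 0 = Suc i) = False" "(Suc i = i - Suc 0) = False" "(j - Suc 0 = Suc j) = False" "(Suc j = j - Suc 0) = False"
    "Suc (i - Suc 0) = i" "Suc (j - Suc 0) = j" using i1 by auto
  obtain a b where xab: "x = (a, b)" by (cases x)
  have a1: "a \<ge> 1" "b \<ge> 1" "a \<le> n" "b \<le> n" "a + b \<ge> n + 1" using x xab by (auto simp: stair_def)
  consider "x = (i, j)" | "x = (i - 1, j)" | "x = (i, j + 1)" | "x = (i, j - 1)" | "x = (i + 1, j)"
    | "x \<noteq> (i, j)" "x \<noteq> (i - 1, j)" "x \<noteq> (i, j + 1)" "x \<noteq> (i, j - 1)" "x \<noteq> (i + 1, j)"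
    by blast
  then show ?thesis
  proof cases
    case 1
    have t1: "tc n I x = -1" using 1 m nu1 nu2 by (simp add: tc_def nq)
    have l1: "(i - 1, j) \<in> I - {(i, j)}" if "(i - 1, j) \<in> stair n" using lo1[OF that] i1 by auto
    have l2: "(i, j - 1) \<in> I - {(i, j)}" if "(i, j - 1) \<in> stair n" using lo2[OF that] i1 by auto
    have t2: "tc n (I - {(i, j)}) x = 1" using 1 l1 l2 by (simp add: tc_def nq)
    show ?thesis using 1 i1 t1 t2 by (simp add: DD_def cc_def nq)
  next
    case 2
    then have "a = i - 1" "b = j" using xab by auto
    have r: "rk n (i, j) = rk n x + 1" using 2 a1 i1 \<open>a = i - 1\<close> \<open>b = j\<close> by (simp add: rk_def)
    have t1: "tc n I x = 0" using 2 lo1 x m i1 by (simp add: tc_def nq)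
    have t2: "tc n (I - {(i, j)}) x = (if (i - 1, j + 1) \<in> I then 0 else -1)"
      using 2 lo1 x i1 by (simp add: tc_def nq)
    show ?thesis using 2 i1 t1 t2 r by (simp add: DD_def cc_def nq)
  next
    case 3
    have r: "rk n x = rk n (i, j) + 1" using 3 i1 by (simp add: rk_def)
    have w: "(i - 1, j + 1) \<in> stair n" using 3 x i1 by (auto simp: stair_def)
    have t1: "tc n I x = (if (i - 1, j + 1) \<in> I then 1 else 0)" using 3 m nu2 w i1 by (simp add: tc_def nq)
    have t2: "tc n (I - {(i, j)}) x = 0"
      using 3 mP nu2 i1 by (simp add: tc_def nq)
    show ?thesis using 3 i1 t1 t2 r by (simp add: DD_def cc_def nq)
  next
    case 4
    then have "a = i" "b = j - 1" using xab by auto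
    have r: "rk n (i, j) = rk n x + 1" using 4 a1 i1 \<open>a = i\<close> \<open>b = j - 1\<close> by (simp add: rk_def)
    have t1: "tc n I x = 0" using 4 lo2 x m i1 by (simp add: tc_def nq)
    have t2: "tc n (I - {(i, j)}) x = (if (i + 1, j - 1) \<in> I then 0 else -1)"
      using 4 lo2 x i1 by (simp add: tc_def nq)
    show ?thesis using 4 i1 t1 t2 r by (simp add: DD_def cc_def nq)
  next
    case 5
    have r: "rk n x = rk n (i, j) + 1" using 5 i1 by (simp add: rk_def)
    have w: "(i + 1, j - 1) \<in> stair n" using 5 x i1 by (auto simp: stair_def)
    have t1: "tc n I x = (if (i + 1, j - 1) \<in> I then 1 else 0)" using 5 m nu1 w i1 by (simp add: tc_def nq)
    have t2: "tc n (I - {(i, j)}) x = 0"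
      using 5 mP nu1 i1 by (simp add: tc_def nq)
    show ?thesis using 5 i1 t1 t2 r by (simp add: DD_def cc_def nq)
  next
    case 6
    have ne: "(a - 1, b) \<noteq> (i, j)" "(a, b - 1) \<noteq> (i, j)" "(a + 1, b) \<noteq> (i, j)" "(a, b + 1) \<noteq> (i, j)"
      "(a, b) \<noteq> (i, j)"
      using 6 xab a1 by auto
    have "tc n I x = tc n (I - {(i, j)}) x" using ne xab by (simp add: tc_def nq)
    then show ?thesis using 6 by (simp add: DD_def)
  qed
qed

lemma step_sum:
  assumes I: "I \<in> order_ideals (stair n)" and m: "(i, j) \<in> I"
    and mx: "\<forall>y\<in>I. fst y + snd y \<le> i + j"
  shows "(\<Sum>x\<in>stair n. cc n x * tc n I x) - (\<Sum>x\<in>stair n. cc n x * tc n (I - {(i, j)}) x)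
         = (-1) ^ rk n (i, j)"
proof -
  have sub: "I \<subseteq> stair n" using I by (auto simp: order_ideals_def)
  have mP: "(i, j) \<in> stair n" using m sub by auto
  have "(\<Sum>x\<in>stair n. cc n x * tc n I x) - (\<Sum>x\<in>stair n. cc n x * tc n (I - {(i, j)}) x)
      = (\<Sum>x\<in>stair n. cc n x * (tc n I x - tc n (I - {(i, j)}) x))"
    by (simp add: sum_subtractf right_diff_distrib)
  also have "\<dots> = (\<Sum>x\<in>stair n. DD n I i j x)"
    using pointwise[OF I m mx] by (rule sum.cong[OF refl])
  also have "\<dots> = (if (i, j) \<in> stair n then (if even (rk n (i, j)) then 1 else 0) else 0)
   + (if (i - 1, j) \<in> stair n then (if odd (rk n (i, j)) \<and> (i - 1, j + 1) \<notin> I then - 1 / 2 else 0) else 0)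
   + (if (i, j + 1) \<in> stair n then (if odd (rk n (i, j)) \<and> (i - 1, j + 1) \<in> I then - 1 / 2 else 0) else 0)
   + (if (i, j - 1) \<in> stair n then (if odd (rk n (i, j)) \<and> (i + 1, j - 1) \<notin> I then - 1 / 2 else 0) else 0)
   + (if (i + 1, j) \<in> stair n then (if odd (rk n (i, j)) \<and> (i + 1, j - 1) \<in> I then - 1 / 2 else 0) else 0)"
    unfolding DD_def by (simp add: sum.distrib stair_finite)
  also have "\<dots> = (-1) ^ rk n (i, j)"
  proof (cases "even (rk n (i, j))")
    case True
    then show ?thesis using mP by simp
  next
    case False
    have "rk n (i, j) \<noteq> 0"
    proof
      assume "rk n (i, j) = 0"
      with False show False by simp
    qed
    then have i1: "i \<ge> 1" "j \<ge> 1" "i \<le> n" "j \<le> n" "i + j \<ge> n + 2"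
      using mP by (auto simp: stair_def rk_def)
    have y1: "(i - 1, j) \<in> stair n" "(i, j - 1) \<in> stair n" using i1 by (auto simp: stair_def)
    have z1: "(i, j + 1) \<in> stair n \<longleftrightarrow> j + 1 \<le> n" "(i + 1, j) \<in> stair n \<longleftrightarrow> i + 1 \<le> n"
      using i1 by (auto simp: stair_def)
    have w1: "(i - 1, j + 1) \<in> I \<Longrightarrow> j + 1 \<le> n" "(i + 1, j - 1) \<in> I \<Longrightarrow> i + 1 \<le> n"
      using sub by (auto simp: stair_def)
    show ?thesis using False y1 z1 w1 by (auto simp: minus_one_power_iff)
  qed
  finally show ?thesis .
qed

lemma base_sum: "(\<Sum>x\<in>stair n. cc n x * tc n {} x) = - real n / 2"
proof -
  have "(\<Sum>x\<in>stair n. cc n x * tc n {} x) = (\<Sum>x\<in>stair n. if fst x + snd x = n + 1 then - 1 / 2 else 0)"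
  proof (rule sum.cong[OF refl])
    fix x assume x: "x \<in> stair n"
    obtain a b where xab: "x = (a, b)" by (cases x)
    show "cc n x * tc n {} x = (if fst x + snd x = n + 1 then - 1 / 2 else 0)"
    proof (cases "a + b = n + 1")
      case True
      then have "(a - 1, b) \<notin> stair n" "(a, b - 1) \<notin> stair n" "rk n x = 0"
        using x xab by (auto simp: stair_def rk_def)
      then show ?thesis using True xab by (simp add: tc_def cc_def)
    next
      case False
      then have "(a - 1, b) \<in> stair n" using x xab by (auto simp: stair_def)
      then show ?thesis using False xab by (simp add: tc_def cc_def)
    qed
  qed
  also have "\<dots> = (\<Sum>x\<in>{x\<in>stair n. fst x + snd x = n + 1}. - 1 / 2)"
    using sum.inter_filter[OF stair_finite, of "\<lambda>_. - 1 / 2 :: real" n "\<lambda>x. fst x + snd x = n + 1"] by simp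
  also have "{x\<in>stair n. fst x + snd x = n + 1} = (\<lambda>a. (a, n + 1 - a)) ` {1..n}"
    by (auto simp: stair_def image_iff)
  also have "card \<dots> = n" by (subst card_image) (auto simp: inj_on_def)
  then have "(\<Sum>x\<in>(\<lambda>a. (a, n + 1 - a)) ` {1..n}. - 1 / 2) = - real n / (2::real)"
    by simp
  finally show ?thesis .
qed

lemma main:
  assumes "I \<in> order_ideals (stair n)"
  shows "(\<Sum>p\<in>stair n. (-1::real) ^ rk n p * indic p I) - real n / 2
          = (\<Sum>x\<in>stair n. cc n x * tc n I x)"
  using assms
proof (induction "card I" arbitrary: I rule: less_induct)
  case less
  have sub: "I \<subseteq> stair n" and dc: "\<And>u v. u \<in> I \<Longrightarrow> v \<in> stair n \<Longrightarrow> ple v u \<Longrightarrow> v \<in> I"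
    using less.prems by (auto simp: order_ideals_def)
  have fin: "finite I" using sub stair_finite finite_subset by blast
  show ?case
  proof (cases "I = {}")
    case True
    then show ?thesis using base_sum by (simp add: indic_def)
  next
    case False
    define M where "M = Max ((\<lambda>p. fst p + snd p) ` I)"
    have "M \<in> (\<lambda>p. fst p + snd p) ` I" unfolding M_def using fin False by simp
    then obtain i j where m: "(i, j) \<in> I" and Mij: "M = i + j" by auto
    have mx: "\<forall>y\<in>I. fst y + snd y \<le> i + j"
    proof
      fix y assume y: "y \<in> I"
      have "fst y + snd y \<le> M" unfolding M_def by (rule Max_ge) (use fin y in auto)
      then show "fst y + snd y \<le> i + j" using Mij by simp
    qed
    define I' where "I' = I - {(i, j)}"
    have I': "I' \<in> order_ideals (stair n)"
      unfolding order_ideals_def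
    proof (intro CollectI conjI ballI impI)
      show "I' \<subseteq> stair n" using sub I'_def by auto
      fix x y assume x: "x \<in> I'" and y: "y \<in> stair n" and le: "ple y x"
      have "y \<in> I" using dc[OF _ y le] x I'_def by auto
      moreover have "y \<noteq> (i, j)"
      proof
        assume "y = (i, j)"
        have "fst x + snd x \<le> i + j" using mx x I'_def by auto
        then have "x = (i, j)" using le \<open>y = (i, j)\<close> by (cases x) (auto simp: ple_def)
        then show False using x I'_def by auto
      qed
      ultimately show "y \<in> I'" using I'_def by auto
    qed
    have lt: "card I' < card I" unfolding I'_def using card_Diff1_less[OF fin m] .
    have IH: "(\<Sum>p\<in>stair n. (-1::real) ^ rk n p * indic p I') - real n / 2
          = (\<Sum>x\<in>stair n. cc n x * tc n I' x)" using less.hyps[OF lt I'] .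
    have ind: "(\<Sum>p\<in>stair n. (-1::real) ^ rk n p * indic p I) - (\<Sum>p\<in>stair n. (-1::real) ^ rk n p * indic p I')
        = (\<Sum>p\<in>stair n. if p = (i, j) then (-1) ^ rk n (i, j) else 0)"
      unfolding sum_subtractf[symmetric]
      by (rule sum.cong[OF refl]) (auto simp: indic_def I'_def m)
    also have "\<dots> = (-1) ^ rk n (i, j)" using m sub by (auto simp: stair_finite)
    finally show ?thesis using IH step_sum[OF less.prems m mx] unfolding I'_def by linarith
  qed
qed

theorem corollary3p29:
  fixes n :: nat
  assumes "n \<ge> 1"
  shows "toggle_equiv (stair n)
           (\<lambda>I. \<Sum>p\<in>stair n. (-1::real) ^ rk n p * indic p I)
           (\<lambda>_. real n / 2)"
  unfolding toggle_equiv_def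
proof (intro exI ballI)
  fix I assume I: "I \<in> order_ideals (stair n)"
  have "(\<Sum>x\<in>stair n. cc n x * toggle (stair n) x I) = (\<Sum>x\<in>stair n. cc n x * tc n I x)"
    by (rule sum.cong[OF refl]) (simp add: toggle_tc[OF I])
  then show "(\<Sum>p\<in>stair n. (-1::real) ^ rk n p * indic p I) - real n / 2
      = (\<Sum>x\<in>stair n. cc n x * toggle (stair n) x I)"
    using main[OF I] by simp
qed

end
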